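(* Among the intervals in $\mathcal{M}_\alpha$, the fiducial interval minimizes the expected length for all $\theta\in\Theta$ as well as the length for all $x\in\mathcal{X}$.
   Context: $\Theta$ is a connected open subset of $\mathbb{R}$, $\mathcal{X}\subseteq\mathbb{Z}$ consists of consecutive integers, $\mathrm{P}_\theta$ denotes probability under $P_\theta$, satisfying (A1) $\mathrm{P}_\theta(X=x)>0$ for all $(\theta,x)$; (A2) $\mathrm{P}_\theta(X\leq x)$ strictly decreasing in $\theta$ for each fixed $x\in\mathcal{X}\backslash\sup\mathcal{X}$; (A3) $\mathrm{P}_\theta(X=x)$ differentiable in $\theta$. $\mathcal{M}_\alpha$ is the class of confidence intervals $(L_{\alpha/2}(x),U_{\alpha/2}(x))$ satisfying (D1) $L_{\alpha/2}(x)\leq L_{\alpha/2}(x+1)$ and $U_{\alpha/2}(x)\leq U_{\alpha/2}(x+1)$; (D2) $\inf_{\theta}\mathrm{P}_\theta(L_{\alpha/2}(X)\leq\theta)\geq 1-\alpha/2$ and $\inf_\theta\mathrm{P}_\theta(U_{\alpha/2}(X)\geq\theta)\geq 1-\alpha/2$; (D3) the interval only depends on $x$, $\alpha$ and $P_\theta$. The fiducial interval is $(\theta_L,\theta_U)$ with $\sum_{k\leq x}\mathrm{P}_{\theta_L}(X=k)=\alpha/2$ and $\sum_{k\geq x}\mathrm{P}_{\theta_U}(X=k)=\alpha/2$. Length is $U_{\alpha/2}(x)-L_{\alpha/2}(x)$; expected length is $\sum_k\mathrm{P}_\theta(X=k)(U_{\alpha/2}(k)-L_{\alpha/2}(k))$.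 *)

theory Defs
  imports "HOL-Analysis.Analysis" "HOL-Probability.Probability"
begin

definition consecutive_ints :: "int set \<Rightarrow> bool" where
  "consecutive_ints S \<longleftrightarrow> S \<noteq> {} \<and> (\<forall>a\<in>S. \<forall>b\<in>S. {a..b} \<subseteq> S)"

definition model_assumptions :: "real set \<Rightarrow> int set \<Rightarrow> (real \<Rightarrow> int pmf) \<Rightarrow> bool" where
  "model_assumptions \<Theta> \<X> P \<longleftrightarrow>
     open \<Theta> \<and> connected \<Theta> \<and> \<Theta> \<noteq> {} \<and> consecutive_ints \<X> \<and>
     \<comment> \<open>the support of every P_theta is X, and (A1) P_theta(X = x) > 0 on X\<close>
     (\<forall>\<theta>\<in>\<Theta>. set_pmf (P \<theta>) \<subseteq> \<X>) \<and>
     (\<forall>\<theta>\<in>\<Theta>. \<forall>x\<in>\<X>. pmf (P \<theta>) x > 0) \<and>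
     \<comment> \<open>(A2) P_theta(X <= x) strictly decreasing in theta, for x in X other than sup X\<close>
     (\<forall>x\<in>\<X>. (\<exists>y\<in>\<X>. x < y) \<longrightarrow>
        (\<forall>\<theta>1\<in>\<Theta>. \<forall>\<theta>2\<in>\<Theta>. \<theta>1 < \<theta>2 \<longrightarrow>
            measure_pmf.prob (P \<theta>2) {..x} < measure_pmf.prob (P \<theta>1) {..x})) \<and>
     \<comment> \<open>(A3) P_theta(X = x) differentiable in theta\<close>
     (\<forall>x\<in>\<X>. \<forall>\<theta>\<in>\<Theta>. (\<lambda>t. pmf (P t) x) differentiable (at \<theta>))"

text \<open>The class M_alpha of (non-randomised) two-sided intervals (L x, U x), with
  extended-real endpoints. (D3) is built in: the endpoints are functions of x only.\<close>

definition class_M :: "real set \<Rightarrow> int set \<Rightarrow> (real \<Rightarrow> int pmf) \<Rightarrow> real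
                        \<Rightarrow> (int \<Rightarrow> ereal) \<Rightarrow> (int \<Rightarrow> ereal) \<Rightarrow> bool" where
  "class_M \<Theta> \<X> P \<alpha> L U \<longleftrightarrow>
     \<comment> \<open>(D1)\<close>
     (\<forall>x. x \<in> \<X> \<and> x + 1 \<in> \<X> \<longrightarrow> L x \<le> L (x + 1) \<and> U x \<le> U (x + 1)) \<and>
     \<comment> \<open>(D2): inf over theta of the one-sided coverage probabilities is >= 1 - alpha/2\<close>
     (\<forall>\<theta>\<in>\<Theta>. measure_pmf.prob (P \<theta>) {x. L x \<le> ereal \<theta>} \<ge> 1 - \<alpha> / 2) \<and>
     (\<forall>\<theta>\<in>\<Theta>. measure_pmf.prob (P \<theta>) {x. U x \<ge> ereal \<theta>} \<ge> 1 - \<alpha> / 2)"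

text \<open>The fiducial interval: for x in X, the lower endpoint theta_L solves
  P_theta(X >= x) = alpha/2 and the upper endpoint theta_U solves P_theta(X <= x) = alpha/2.
  At the boundary of X (where no solution can exist) the endpoint is the
  corresponding end of Theta.\<close>

definition fiducial :: "real set \<Rightarrow> int set \<Rightarrow> (real \<Rightarrow> int pmf) \<Rightarrow> real
                        \<Rightarrow> (int \<Rightarrow> ereal) \<Rightarrow> (int \<Rightarrow> ereal) \<Rightarrow> bool" where
  "fiducial \<Theta> \<X> P \<alpha> Lf Uf \<longleftrightarrow>
     (\<forall>x\<in>\<X>.
        (if \<exists>y\<in>\<X>. y < x
         then (\<exists>\<theta>\<in>\<Theta>. Lf x = ereal \<theta> \<and> measure_pmf.prob (P \<theta>) {x..} = \<alpha> / 2)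
         else Lf x = Inf (ereal ` \<Theta>)) \<and>
        (if \<exists>y\<in>\<X>. x < y
         then (\<exists>\<theta>\<in>\<Theta>. Uf x = ereal \<theta> \<and> measure_pmf.prob (P \<theta>) {..x} = \<alpha> / 2)
         else Uf x = Sup (ereal ` \<Theta>)))"

definition ci_length :: "(int \<Rightarrow> ereal) \<Rightarrow> (int \<Rightarrow> ereal) \<Rightarrow> int \<Rightarrow> ereal" where
  "ci_length L U x = U x - L x"

definition expected_length :: "(real \<Rightarrow> int pmf) \<Rightarrow> (int \<Rightarrow> ereal) \<Rightarrow> (int \<Rightarrow> ereal) \<Rightarrow> real \<Rightarrow> ennreal" where
  "expected_length P L U \<theta> = (\<integral>\<^sup>+ k. e2ennreal (ci_length L U k) \<partial>measure_pmf (P \<theta>))"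

end

theory Submission
  imports Defs
begin

locale setting =
  fixes \<Theta> :: "real set" and X :: "int set" and P :: "real \<Rightarrow> int pmf" and \<alpha> :: real
  assumes openT: "open \<Theta>" and cons: "consecutive_ints X"
   and supp: "\<And>\<theta>. \<theta>\<in>\<Theta> \<Longrightarrow> set_pmf (P \<theta>) \<subseteq> X"
   and pos: "\<And>\<theta> x. \<theta>\<in>\<Theta> \<Longrightarrow> x\<in>X \<Longrightarrow> pmf (P \<theta>) x > 0"
   and A2: "\<And>x \<theta>1 \<theta>2. x\<in>X \<Longrightarrow> x+1 \<in> X \<Longrightarrow> \<theta>1\<in>\<Theta> \<Longrightarrow> \<theta>2\<in>\<Theta> \<Longrightarrow> \<theta>1 < \<theta>2 \<Longrightarrow>
            measure_pmf.prob (P \<theta>2) {..x} < measure_pmf.prob (P \<theta>1) {..x}"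
   and a0: "0 < \<alpha>" and a1: "\<alpha> < 1"
begin

abbreviation pr where "pr \<theta> A \<equiv> measure_pmf.prob (P \<theta>) A"

lemma between: "a \<in> X \<Longrightarrow> b \<in> X \<Longrightarrow> a \<le> c \<Longrightarrow> c \<le> b \<Longrightarrow> c \<in> X"
  using cons unfolding consecutive_ints_def by (meson atLeastAtMost_iff subsetD)

lemma mono_ext:
  fixes f :: "int \<Rightarrow> 'b::order"
  assumes m: "\<forall>x. x\<in>X \<and> x+1\<in>X \<longrightarrow> f x \<le> f (x+1)"
  and "x \<in> X" "y \<in> X" "x \<le> y"
  shows "f x \<le> f y"
  using assms(4,3)
proof (induction y rule: int_ge_induct)
  case base then show ?case by simp
next
  case (step i)
  have "i \<in> X" using between[OF assms(2) step(3)] step(1) by simp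
  then have "f x \<le> f i" using step by simp
  also have "f i \<le> f (i+1)" using m \<open>i\<in>X\<close> step(3) by blast
  finally show ?case .
qed

lemma compl_lower: "pr \<theta> {..<x} = 1 - pr \<theta> {x..}"
proof -
  have "{..<x} = UNIV - {x..}" by auto
  then show ?thesis using measure_pmf.prob_compl[of "{x..}" "P \<theta>"] by simp
qed

lemma compl_upper: "pr \<theta> {x<..} = 1 - pr \<theta> {..x}"
proof -
  have "{x<..} = UNIV - {..x}" by auto
  then show ?thesis using measure_pmf.prob_compl[of "{..x}" "P \<theta>"] by simp
qed

lemma A2L: "x\<in>X \<Longrightarrow> x-1 \<in> X \<Longrightarrow> \<theta>1\<in>\<Theta> \<Longrightarrow> \<theta>2\<in>\<Theta> \<Longrightarrow> \<theta>1 < \<theta>2 \<Longrightarrow>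
            pr \<theta>1 {x..} < pr \<theta>2 {x..}"
proof -
  assume h: "x\<in>X" "x-1 \<in> X" "\<theta>1\<in>\<Theta>" "\<theta>2\<in>\<Theta>" "\<theta>1 < \<theta>2"
  have "pr \<theta>2 {..x-1} < pr \<theta>1 {..x-1}" using A2[of "x-1"] h by simp
  moreover have "{..x-1} = {..<x}" by auto
  ultimately show ?thesis using compl_lower by simp
qed

lemma restrictX: "\<theta>\<in>\<Theta> \<Longrightarrow> pr \<theta> A = pr \<theta> (A \<inter> X)"
proof -
  assume "\<theta>\<in>\<Theta>"
  then have "A \<inter> X \<inter> set_pmf (P \<theta>) = A \<inter> set_pmf (P \<theta>)" using supp by auto
  then show ?thesis by (metis measure_Int_set_pmf)
qed

lemma tail_lower: "e < 1 \<Longrightarrow> \<exists>z. pr \<theta> {z..} > e"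
proof -
  assume e: "e < 1"
  define A where "A = (\<lambda>n::nat. {- int n..})"
  have inc: "incseq A" unfolding A_def incseq_def by auto
  have U: "(\<Union>i. A i) = UNIV" unfolding A_def
  proof (auto)
    fix x :: int show "\<exists>n::nat. - int n \<le> x" by (rule exI[of _ "nat \<bar>x\<bar>"]) simp
  qed
  have "(\<lambda>i. pr \<theta> (A i)) \<longlonglongrightarrow> pr \<theta> (\<Union>i. A i)"
    by (rule Lim_measure_incseq) (use inc in auto)
  then have "(\<lambda>i. pr \<theta> (A i)) \<longlonglongrightarrow> 1" using U by simp
  then have "eventually (\<lambda>i. pr \<theta> (A i) > e) sequentially"
    using e order_tendstoD(1) by blast
  then obtain i where "pr \<theta> (A i) > e" using eventually_sequentially by auto
  then show ?thesis unfolding A_def by blast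
qed

lemma tail_upper: "e < 1 \<Longrightarrow> \<exists>z. pr \<theta> {..z} > e"
proof -
  assume e: "e < 1"
  define A where "A = (\<lambda>n::nat. {..int n})"
  have inc: "incseq A" unfolding A_def incseq_def by auto
  have U: "(\<Union>i. A i) = UNIV" unfolding A_def
  proof (auto)
    fix x :: int show "\<exists>n::nat. x \<le> int n" by (rule exI[of _ "nat \<bar>x\<bar>"]) simp
  qed
  have "(\<lambda>i. pr \<theta> (A i)) \<longlonglongrightarrow> pr \<theta> (\<Union>i. A i)"
    by (rule Lim_measure_incseq) (use inc in auto)
  then have "(\<lambda>i. pr \<theta> (A i)) \<longlonglongrightarrow> 1" using U by simp
  then have "eventually (\<lambda>i. pr \<theta> (A i) > e) sequentially"
    using e order_tendstoD(1) by blast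
  then obtain i where "pr \<theta> (A i) > e" using eventually_sequentially by auto
  then show ?thesis unfolding A_def by blast
qed

lemma near_above: "\<theta>0 \<in> \<Theta> \<Longrightarrow> ereal \<theta>0 < a \<Longrightarrow> \<exists>\<theta>\<in>\<Theta>. \<theta>0 < \<theta> \<and> ereal \<theta> < a"
proof -
  assume h: "\<theta>0 \<in> \<Theta>" "ereal \<theta>0 < a"
  obtain r where r: "\<theta>0 < r" "ereal r < a" using ereal_dense2[OF h(2)] by auto
  obtain e where e: "e > 0" "ball \<theta>0 e \<subseteq> \<Theta>" using openT h(1) open_contains_ball by blast
  define t where "t = min r (\<theta>0 + e/2)"
  have "t \<in> ball \<theta>0 e" using e r unfolding t_def by (auto simp: dist_real_def)
  moreover have "\<theta>0 < t" using e r unfolding t_def by auto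
  moreover have "ereal t < a" using r unfolding t_def by (meson ereal_less_eq(3) min.cobounded1 order_le_less_trans)
  ultimately show ?thesis using e by blast
qed

lemma near_below: "\<theta>0 \<in> \<Theta> \<Longrightarrow> a < ereal \<theta>0 \<Longrightarrow> \<exists>\<theta>\<in>\<Theta>. \<theta> < \<theta>0 \<and> a < ereal \<theta>"
proof -
  assume h: "\<theta>0 \<in> \<Theta>" "a < ereal \<theta>0"
  obtain r where r: "r < \<theta>0" "a < ereal r" using ereal_dense2[OF h(2)] by auto
  obtain e where e: "e > 0" "ball \<theta>0 e \<subseteq> \<Theta>" using openT h(1) open_contains_ball by blast
  define t where "t = max r (\<theta>0 - e/2)"
  have "t \<in> ball \<theta>0 e" using e r unfolding t_def by (auto simp: dist_real_def)
  moreover have "t < \<theta>0" using e r unfolding t_def by auto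
  moreover have "a < ereal t" using r unfolding t_def by (meson ereal_less_eq(3) max.cobounded1 order_less_le_trans)
  ultimately show ?thesis using e by blast
qed

lemma opt_L:
  assumes cM: "class_M \<Theta> X P \<alpha> L U" and fid: "fiducial \<Theta> X P \<alpha> Lf Uf" and x0: "x0 \<in> X"
  shows "L x0 \<le> Lf x0"
proof -
  have monoL: "\<forall>x. x\<in>X \<and> x+1\<in>X \<longrightarrow> L x \<le> L (x+1)"
    and covL: "\<And>\<theta>. \<theta>\<in>\<Theta> \<Longrightarrow> pr \<theta> {x. L x \<le> ereal \<theta>} \<ge> 1 - \<alpha>/2"
    using cM unfolding class_M_def by auto
  show ?thesis
  proof (cases "\<exists>y\<in>X. y < x0")
    case True
    then obtain y where y: "y \<in> X" "y < x0" by auto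
    have "\<exists>\<theta>\<in>\<Theta>. Lf x0 = ereal \<theta> \<and> pr \<theta> {x0..} = \<alpha>/2"
      using fid x0 True unfolding fiducial_def by (metis (no_types, lifting))
    then obtain \<theta>0 where t0: "\<theta>0\<in>\<Theta>" "Lf x0 = ereal \<theta>0" "pr \<theta>0 {x0..} = \<alpha>/2" by blast
    show ?thesis
    proof (rule ccontr)
      assume "\<not> L x0 \<le> Lf x0"
      then have "ereal \<theta>0 < L x0" using t0 by simp
      then obtain \<theta> where th: "\<theta>\<in>\<Theta>" "\<theta>0 < \<theta>" "ereal \<theta> < L x0" using near_above t0(1) by blast
      have xm: "x0 - 1 \<in> X" using between[OF y(1) x0] y by simp
      have lt: "pr \<theta>0 {x0..} < pr \<theta> {x0..}" using A2L[OF x0 xm t0(1) th(1,2)] .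
      have sub: "{x. L x \<le> ereal \<theta>} \<inter> X \<subseteq> {..<x0}"
      proof
        fix z assume z: "z \<in> {x. L x \<le> ereal \<theta>} \<inter> X"
        show "z \<in> {..<x0}"
        proof (rule ccontr)
          assume "z \<notin> {..<x0}"
          then have "x0 \<le> z" by simp
          then have "L x0 \<le> L z" using mono_ext[OF monoL x0] z by auto
          then show False using z th(3) by auto
        qed
      qed
      have "pr \<theta> {x. L x \<le> ereal \<theta>} = pr \<theta> ({x. L x \<le> ereal \<theta>} \<inter> X)" using restrictX th(1) by blast
      also have "\<dots> \<le> pr \<theta> {..<x0}" using sub by (intro measure_pmf.finite_measure_mono) auto
      also have "\<dots> = 1 - pr \<theta> {x0..}" by (rule compl_lower)
      also have "\<dots> < 1 - \<alpha>/2" using lt t0(3) by simp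
      finally show False using covL[OF th(1)] by simp
    qed
  next
    case False
    then have Lf: "Lf x0 = Inf (ereal ` \<Theta>)" using fid x0 unfolding fiducial_def by auto
    show ?thesis
    proof (rule ccontr)
      assume "\<not> L x0 \<le> Lf x0"
      then have "Inf (ereal ` \<Theta>) < L x0" using Lf by simp
      then obtain \<theta> where th: "\<theta>\<in>\<Theta>" "ereal \<theta> < L x0" by (auto simp: Inf_less_iff)
      have e: "{x. L x \<le> ereal \<theta>} \<inter> X = {}"
      proof (rule ccontr)
        assume "{x. L x \<le> ereal \<theta>} \<inter> X \<noteq> {}"
        then obtain z where z: "z \<in> X" "L z \<le> ereal \<theta>" by auto
        then have "x0 \<le> z" using False by force
        then have "L x0 \<le> L z" using mono_ext[OF monoL x0] z by auto
        then show False using z th by auto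
      qed
      have "pr \<theta> {x. L x \<le> ereal \<theta>} = 0" using restrictX[OF th(1), of "{x. L x \<le> ereal \<theta>}"] e by simp
      then show False using covL[OF th(1)] a1 by simp
    qed
  qed
qed

lemma opt_U:
  assumes cM: "class_M \<Theta> X P \<alpha> L U" and fid: "fiducial \<Theta> X P \<alpha> Lf Uf" and x0: "x0 \<in> X"
  shows "Uf x0 \<le> U x0"
proof -
  have monoU: "\<forall>x. x\<in>X \<and> x+1\<in>X \<longrightarrow> U x \<le> U (x+1)"
    and covU: "\<And>\<theta>. \<theta>\<in>\<Theta> \<Longrightarrow> pr \<theta> {x. U x \<ge> ereal \<theta>} \<ge> 1 - \<alpha>/2"
    using cM unfolding class_M_def by auto
  show ?thesis
  proof (cases "\<exists>y\<in>X. x0 < y")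
    case True
    then obtain y where y: "y \<in> X" "x0 < y" by auto
    have "\<exists>\<theta>\<in>\<Theta>. Uf x0 = ereal \<theta> \<and> pr \<theta> {..x0} = \<alpha>/2"
      using fid x0 True unfolding fiducial_def by (metis (no_types, lifting))
    then obtain \<theta>0 where t0: "\<theta>0\<in>\<Theta>" "Uf x0 = ereal \<theta>0" "pr \<theta>0 {..x0} = \<alpha>/2" by blast
    show ?thesis
    proof (rule ccontr)
      assume "\<not> Uf x0 \<le> U x0"
      then have "U x0 < ereal \<theta>0" using t0 by simp
      then obtain \<theta> where th: "\<theta>\<in>\<Theta>" "\<theta> < \<theta>0" "U x0 < ereal \<theta>" using near_below t0(1) by blast
      have xp: "x0 + 1 \<in> X" using between[OF x0 y(1)] y by simp
      have lt: "pr \<theta>0 {..x0} < pr \<theta> {..x0}" using A2[OF x0 xp th(1) t0(1) th(2)] .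
      have sub: "{x. U x \<ge> ereal \<theta>} \<inter> X \<subseteq> {x0<..}"
      proof
        fix z assume z: "z \<in> {x. U x \<ge> ereal \<theta>} \<inter> X"
        show "z \<in> {x0<..}"
        proof (rule ccontr)
          assume "z \<notin> {x0<..}"
          then have "z \<le> x0" by simp
          then have "U z \<le> U x0" using mono_ext[OF monoU _ x0] z by auto
          then show False using z th(3) by auto
        qed
      qed
      have "pr \<theta> {x. U x \<ge> ereal \<theta>} = pr \<theta> ({x. U x \<ge> ereal \<theta>} \<inter> X)" using restrictX th(1) by blast
      also have "\<dots> \<le> pr \<theta> {x0<..}" using sub by (intro measure_pmf.finite_measure_mono) auto
      also have "\<dots> = 1 - pr \<theta> {..x0}" by (rule compl_upper)
      also have "\<dots> < 1 - \<alpha>/2" using lt t0(3) by simp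
      finally show False using covU[OF th(1)] by simp
    qed
  next
    case False
    then have Uf: "Uf x0 = Sup (ereal ` \<Theta>)" using fid x0 unfolding fiducial_def by auto
    show ?thesis
    proof (rule ccontr)
      assume "\<not> Uf x0 \<le> U x0"
      then have "U x0 < Sup (ereal ` \<Theta>)" using Uf by simp
      then obtain \<theta> where th: "\<theta>\<in>\<Theta>" "U x0 < ereal \<theta>" by (auto simp: less_Sup_iff)
      have e: "{x. U x \<ge> ereal \<theta>} \<inter> X = {}"
      proof (rule ccontr)
        assume "{x. U x \<ge> ereal \<theta>} \<inter> X \<noteq> {}"
        then obtain z where z: "z \<in> X" "U z \<ge> ereal \<theta>" by auto
        then have "z \<le> x0" using False by force
        then have "U z \<le> U x0" using mono_ext[OF monoU _ x0] z by auto
        then show False using z th by auto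
      qed
      have "pr \<theta> {x. U x \<ge> ereal \<theta>} = 0" using restrictX[OF th(1), of "{x. U x \<ge> ereal \<theta>}"] e by simp
      then show False using covU[OF th(1)] a1 by simp
    qed
  qed
qed

lemma least_int:
  fixes B :: "int set"
  assumes "b \<in> B" "\<forall>z\<in>B. d < z"
  shows "\<exists>m\<in>B. \<forall>z\<in>B. m \<le> z"
proof -
  define n0 where "n0 = (LEAST n::nat. d + int n \<in> B)"
  have "d < b" using assms by blast
  then have "d + int (nat (b - d)) \<in> B" using assms(1) by simp
  then have m: "d + int n0 \<in> B" unfolding n0_def by (rule LeastI)
  have "\<forall>z\<in>B. d + int n0 \<le> z"
  proof
    fix z assume z: "z \<in> B"
    have "d < z" using assms z by blast
    then have "d + int (nat (z - d)) \<in> B" using z by simp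
    then have "n0 \<le> nat (z - d)" unfolding n0_def by (rule Least_le)
    then show "d + int n0 \<le> z" using \<open>d < z\<close> by linarith
  qed
  then show ?thesis using m by blast
qed

lemma greatest_int:
  fixes C :: "int set"
  assumes "c \<in> C" "\<forall>z\<in>C. z < d"
  shows "\<exists>m\<in>C. \<forall>z\<in>C. z \<le> m"
proof -
  have "-c \<in> uminus ` C" "\<forall>z\<in>uminus ` C. -d < z" using assms by auto
  from least_int[OF this] obtain m where "m \<in> uminus ` C" "\<forall>z\<in>uminus ` C. m \<le> z" by blast
  then show ?thesis by (intro bexI[of _ "-m"]) auto
qed

lemma down_all: "x0 \<in> X \<Longrightarrow> \<forall>x\<in>X. \<exists>y\<in>X. y < x \<Longrightarrow> \<exists>x\<in>X. x \<le> z"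
proof -
  assume x0: "x0 \<in> X" and h: "\<forall>x\<in>X. \<exists>y\<in>X. y < x"
  have k: "x0 - int k \<in> X" for k
  proof (induction k)
    case 0 then show ?case using x0 by simp
  next
    case (Suc k)
    then obtain y where "y \<in> X" "y < x0 - int k" using h by blast
    then have "x0 - int k - 1 \<in> X" using between[OF _ Suc] by auto
    then show ?case by (simp add: algebra_simps)
  qed
  show ?thesis using k[of "nat \<bar>x0 - z\<bar>"] by (intro bexI[of _ "x0 - int (nat \<bar>x0 - z\<bar>)"]) auto
qed

lemma up_all: "x0 \<in> X \<Longrightarrow> \<forall>x\<in>X. \<exists>y\<in>X. x < y \<Longrightarrow> \<exists>x\<in>X. z \<le> x"
proof -
  assume x0: "x0 \<in> X" and h: "\<forall>x\<in>X. \<exists>y\<in>X. x < y"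
  have k: "x0 + int k \<in> X" for k
  proof (induction k)
    case 0 then show ?case using x0 by simp
  next
    case (Suc k)
    then obtain y where "y \<in> X" "x0 + int k < y" using h by blast
    then have "x0 + int k + 1 \<in> X" using between[OF Suc] by auto
    then show ?case by (simp add: algebra_simps)
  qed
  show ?thesis using k[of "nat \<bar>x0 - z\<bar>"] by (intro bexI[of _ "x0 + int (nat \<bar>x0 - z\<bar>)"]) auto
qed

lemma fidL:
  assumes fid: "fiducial \<Theta> X P \<alpha> Lf Uf" and x: "x \<in> X" and "\<exists>y\<in>X. y < x"
  shows "\<exists>\<theta>\<in>\<Theta>. Lf x = ereal \<theta> \<and> pr \<theta> {x..} = \<alpha>/2"
  using assms unfolding fiducial_def by (metis (no_types, lifting))

lemma fidL0:
  assumes fid: "fiducial \<Theta> X P \<alpha> Lf Uf" and x: "x \<in> X" and "\<not>(\<exists>y\<in>X. y < x)"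
  shows "Lf x = Inf (ereal ` \<Theta>)"
  using assms unfolding fiducial_def by (metis (no_types, lifting))

lemma fidU:
  assumes fid: "fiducial \<Theta> X P \<alpha> Lf Uf" and x: "x \<in> X" and "\<exists>y\<in>X. x < y"
  shows "\<exists>\<theta>\<in>\<Theta>. Uf x = ereal \<theta> \<and> pr \<theta> {..x} = \<alpha>/2"
  using assms unfolding fiducial_def by (metis (no_types, lifting))

lemma fidU0:
  assumes fid: "fiducial \<Theta> X P \<alpha> Lf Uf" and x: "x \<in> X" and "\<not>(\<exists>y\<in>X. x < y)"
  shows "Uf x = Sup (ereal ` \<Theta>)"
  using assms unfolding fiducial_def by (metis (no_types, lifting))

lemma monoLf:
  assumes fid: "fiducial \<Theta> X P \<alpha> Lf Uf"
  shows "\<forall>x. x\<in>X \<and> x+1\<in>X \<longrightarrow> Lf x \<le> Lf (x+1)"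
proof (intro allI impI)
  fix x assume h: "x\<in>X \<and> x+1\<in>X"
  obtain \<theta>2 where t2: "\<theta>2\<in>\<Theta>" "Lf (x+1) = ereal \<theta>2" "pr \<theta>2 {x+1..} = \<alpha>/2"
    using fidL[OF fid, of "x+1"] h by force
  show "Lf x \<le> Lf (x+1)"
  proof (cases "\<exists>y\<in>X. y < x")
    case True
    obtain \<theta>1 where t1: "\<theta>1\<in>\<Theta>" "Lf x = ereal \<theta>1" "pr \<theta>1 {x..} = \<alpha>/2"
      using fidL[OF fid, of x] h True by force
    show ?thesis
    proof (rule ccontr)
      assume "\<not> ?thesis"
      then have lt: "\<theta>2 < \<theta>1" using t1 t2 by simp
      have "pr \<theta>2 {x+1..} < pr \<theta>1 {x+1..}" using A2L[of "x+1" \<theta>2 \<theta>1] h t1 t2 lt by simp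
      also have "\<dots> \<le> pr \<theta>1 {x..}" by (intro measure_pmf.finite_measure_mono) auto
      finally show False using t1 t2 by simp
    qed
  next
    case False
    then have "Lf x = Inf (ereal ` \<Theta>)" using fidL0[OF fid] h by blast
    also have "\<dots> \<le> ereal \<theta>2" using t2(1) by (simp add: INF_lower)
    finally show ?thesis using t2 by simp
  qed
qed

lemma monoUf:
  assumes fid: "fiducial \<Theta> X P \<alpha> Lf Uf"
  shows "\<forall>x. x\<in>X \<and> x+1\<in>X \<longrightarrow> Uf x \<le> Uf (x+1)"
proof (intro allI impI)
  fix x assume h: "x\<in>X \<and> x+1\<in>X"
  obtain \<theta>1 where t1: "\<theta>1\<in>\<Theta>" "Uf x = ereal \<theta>1" "pr \<theta>1 {..x} = \<alpha>/2"
    using fidU[OF fid, of "x"] h by force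
  show "Uf x \<le> Uf (x+1)"
  proof (cases "\<exists>y\<in>X. x+1 < y")
    case True
    obtain \<theta>2 where t2: "\<theta>2\<in>\<Theta>" "Uf (x+1) = ereal \<theta>2" "pr \<theta>2 {..x+1} = \<alpha>/2"
      using fidU[OF fid, of "x+1"] h True by force
    show ?thesis
    proof (rule ccontr)
      assume "\<not> ?thesis"
      then have lt: "\<theta>2 < \<theta>1" using t1 t2 by simp
      have "pr \<theta>1 {..x} < pr \<theta>2 {..x}" using A2[of x \<theta>2 \<theta>1] h t1 t2 lt by simp
      also have "\<dots> \<le> pr \<theta>2 {..x+1}" by (intro measure_pmf.finite_measure_mono) auto
      finally show False using t1 t2 by simp
    qed
  next
    case False
    then have "Uf (x+1) = Sup (ereal ` \<Theta>)" using fidU0[OF fid] h by blast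
    moreover have "ereal \<theta>1 \<le> Sup (ereal ` \<Theta>)" using t1(1) by (simp add: SUP_upper)
    ultimately show ?thesis using t1 by simp
  qed
qed

lemma covLf:
  assumes fid: "fiducial \<Theta> X P \<alpha> Lf Uf" and th: "\<theta> \<in> \<Theta>"
  shows "pr \<theta> {x. Lf x \<le> ereal \<theta>} \<ge> 1 - \<alpha>/2"
proof -
  define B where "B = {x\<in>X. ereal \<theta> < Lf x}"
  have monoE: "\<And>x y. x\<in>X \<Longrightarrow> y\<in>X \<Longrightarrow> x\<le>y \<Longrightarrow> Lf x \<le> Lf y"
    using mono_ext[OF monoLf[OF fid]] by blast
  have infle: "Inf (ereal ` \<Theta>) \<le> ereal \<theta>" using th by (simp add: INF_lower)
  have Bpred: "\<exists>y\<in>X. y < x" if "x \<in> B" for x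
  proof (rule ccontr)
    assume "\<not> ?thesis"
    then have "Lf x = Inf (ereal ` \<Theta>)" using fidL0[OF fid] that unfolding B_def by blast
    then show False using that infle unfolding B_def by auto
  qed
  have Bsmall: "pr \<theta> {x..} < \<alpha>/2" if xB: "x \<in> B" for x
  proof -
    obtain y where y: "y\<in>X" "y < x" using Bpred[OF xB] by blast
    have xX: "x \<in> X" using that unfolding B_def by simp
    obtain \<theta>1 where t1: "\<theta>1\<in>\<Theta>" "Lf x = ereal \<theta>1" "pr \<theta>1 {x..} = \<alpha>/2"
      using fidL[OF fid xX Bpred[OF xB]] by blast
    have "\<theta> < \<theta>1" using xB t1 unfolding B_def by simp
    moreover have "x - 1 \<in> X" using between[OF y(1) xX] y by simp
    ultimately have "pr \<theta> {x..} < pr \<theta>1 {x..}" using A2L xX th t1(1) by blast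
    then show ?thesis using t1 by simp
  qed
  have PB: "pr \<theta> B \<le> \<alpha>/2"
  proof (cases "B = {}")
    case True then show ?thesis using a0 by simp
  next
    case False
    then obtain b where b: "b \<in> B" by blast
    have "\<exists>d\<in>X. d \<notin> B"
    proof (rule ccontr)
      assume "\<not> ?thesis"
      then have all: "\<forall>x\<in>X. x \<in> B" by blast
      obtain z where z: "pr \<theta> {z..} > \<alpha>/2" using tail_lower[of "\<alpha>/2"] a1 by auto
      have "\<forall>x\<in>X. \<exists>y\<in>X. y < x" using all Bpred by blast
      then obtain x where x: "x \<in> X" "x \<le> z" using down_all b unfolding B_def by blast
      have "pr \<theta> {z..} \<le> pr \<theta> {x..}" using x by (intro measure_pmf.finite_measure_mono) auto
      then show False using Bsmall[of x] all x z by simp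
    qed
    then obtain d where d: "d \<in> X" "d \<notin> B" by blast
    have "\<forall>z\<in>B. d < z"
    proof
      fix z assume z: "z \<in> B"
      show "d < z"
      proof (rule ccontr)
        assume "\<not> d < z"
        then have "Lf z \<le> Lf d" using monoE z d unfolding B_def by auto
        then show False using z d unfolding B_def by auto
      qed
    qed
    from least_int[OF b this] obtain m where m: "m \<in> B" "\<forall>z\<in>B. m \<le> z" by blast
    have "pr \<theta> B \<le> pr \<theta> {m..}" using m by (intro measure_pmf.finite_measure_mono) auto
    then show ?thesis using Bsmall[OF m(1)] by simp
  qed
  have eq: "{x. Lf x \<le> ereal \<theta>} \<inter> X = X - B" unfolding B_def by auto
  have "pr \<theta> X = 1" using restrictX[OF th, of UNIV] by simp
  have "pr \<theta> {x. Lf x \<le> ereal \<theta>} = pr \<theta> (X - B)" using restrictX[OF th] eq by metis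
  also have "\<dots> = pr \<theta> X - pr \<theta> B"
    by (rule measure_pmf.finite_measure_Diff) (auto simp: B_def)
  finally show ?thesis using PB \<open>pr \<theta> X = 1\<close> by simp
qed

lemma covUf:
  assumes fid: "fiducial \<Theta> X P \<alpha> Lf Uf" and th: "\<theta> \<in> \<Theta>"
  shows "pr \<theta> {x. Uf x \<ge> ereal \<theta>} \<ge> 1 - \<alpha>/2"
proof -
  define B where "B = {x\<in>X. Uf x < ereal \<theta>}"
  have monoE: "\<And>x y. x\<in>X \<Longrightarrow> y\<in>X \<Longrightarrow> x\<le>y \<Longrightarrow> Uf x \<le> Uf y"
    using mono_ext[OF monoUf[OF fid]] by blast
  have supge: "ereal \<theta> \<le> Sup (ereal ` \<Theta>)" using th by (simp add: SUP_upper)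
  have Bsucc: "\<exists>y\<in>X. x < y" if "x \<in> B" for x
  proof (rule ccontr)
    assume "\<not> ?thesis"
    then have "Uf x = Sup (ereal ` \<Theta>)" using fidU0[OF fid] that unfolding B_def by blast
    then show False using that supge unfolding B_def by auto
  qed
  have Bsmall: "pr \<theta> {..x} < \<alpha>/2" if xB: "x \<in> B" for x
  proof -
    obtain y where y: "y\<in>X" "x < y" using Bsucc[OF xB] by blast
    have xX: "x \<in> X" using that unfolding B_def by simp
    obtain \<theta>1 where t1: "\<theta>1\<in>\<Theta>" "Uf x = ereal \<theta>1" "pr \<theta>1 {..x} = \<alpha>/2"
      using fidU[OF fid xX Bsucc[OF xB]] by blast
    have "\<theta>1 < \<theta>" using xB t1 unfolding B_def by simp
    moreover have "x + 1 \<in> X" using between[OF xX y(1)] y by simp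
    ultimately have "pr \<theta> {..x} < pr \<theta>1 {..x}" using A2 xX th t1(1) by blast
    then show ?thesis using t1 by simp
  qed
  have PB: "pr \<theta> B \<le> \<alpha>/2"
  proof (cases "B = {}")
    case True then show ?thesis using a0 by simp
  next
    case False
    then obtain b where b: "b \<in> B" by blast
    have "\<exists>d\<in>X. d \<notin> B"
    proof (rule ccontr)
      assume "\<not> ?thesis"
      then have all: "\<forall>x\<in>X. x \<in> B" by blast
      obtain z where z: "pr \<theta> {..z} > \<alpha>/2" using tail_upper[of "\<alpha>/2"] a1 by auto
      have "\<forall>x\<in>X. \<exists>y\<in>X. x < y" using all Bsucc by blast
      then obtain x where x: "x \<in> X" "z \<le> x" using up_all b unfolding B_def by blast
      have "pr \<theta> {..z} \<le> pr \<theta> {..x}" using x by (intro measure_pmf.finite_measure_mono) auto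
      then show False using Bsmall[of x] all x z by simp
    qed
    then obtain d where d: "d \<in> X" "d \<notin> B" by blast
    have "\<forall>z\<in>B. z < d"
    proof
      fix z assume z: "z \<in> B"
      show "z < d"
      proof (rule ccontr)
        assume "\<not> z < d"
        then have "Uf d \<le> Uf z" using monoE z d unfolding B_def by auto
        then show False using z d unfolding B_def by auto
      qed
    qed
    from greatest_int[OF b this] obtain m where m: "m \<in> B" "\<forall>z\<in>B. z \<le> m" by blast
    have "pr \<theta> B \<le> pr \<theta> {..m}" using m by (intro measure_pmf.finite_measure_mono) auto
    then show ?thesis using Bsmall[OF m(1)] by simp
  qed
  have eq: "{x. Uf x \<ge> ereal \<theta>} \<inter> X = X - B" unfolding B_def by auto
  have "pr \<theta> X = 1" using restrictX[OF th, of UNIV] by simp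
  have "pr \<theta> {x. Uf x \<ge> ereal \<theta>} = pr \<theta> (X - B)" using restrictX[OF th] eq by metis
  also have "\<dots> = pr \<theta> X - pr \<theta> B"
    by (rule measure_pmf.finite_measure_Diff) (auto simp: B_def)
  finally show ?thesis using PB \<open>pr \<theta> X = 1\<close> by simp
qed

end

theorem proposition10:
  fixes \<Theta> :: "real set" and \<X> :: "int set" and P :: "real \<Rightarrow> int pmf" and \<alpha> :: real
    and Lf Uf :: "int \<Rightarrow> ereal"
  assumes "model_assumptions \<Theta> \<X> P"
    and "0 < \<alpha>" and "\<alpha> < 1"
    and "fiducial \<Theta> \<X> P \<alpha> Lf Uf"
  shows "class_M \<Theta> \<X> P \<alpha> Lf Uf \<and>
         (\<forall>L U. class_M \<Theta> \<X> P \<alpha> L U \<longrightarrow>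
            (\<forall>\<theta>\<in>\<Theta>. expected_length P Lf Uf \<theta> \<le> expected_length P L U \<theta>) \<and>
            (\<forall>x\<in>\<X>. ci_length Lf Uf x \<le> ci_length L U x))"
proof -
  interpret setting \<Theta> \<X> P \<alpha>
  proof (unfold_locales)
    have m: "model_assumptions \<Theta> \<X> P" by (rule assms(1))
    show "open \<Theta>" "consecutive_ints \<X>" using m unfolding model_assumptions_def by auto
    show "\<And>\<theta>. \<theta>\<in>\<Theta> \<Longrightarrow> set_pmf (P \<theta>) \<subseteq> \<X>" using m unfolding model_assumptions_def by auto
    show "\<And>\<theta> x. \<theta>\<in>\<Theta> \<Longrightarrow> x\<in>\<X> \<Longrightarrow> pmf (P \<theta>) x > 0" using m unfolding model_assumptions_def by auto
    show "0 < \<alpha>" "\<alpha> < 1" by (rule assms(2), rule assms(3))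
    fix x \<theta>1 \<theta>2 assume h: "x\<in>\<X>" "x+1 \<in> \<X>" "\<theta>1\<in>\<Theta>" "\<theta>2\<in>\<Theta>" "\<theta>1 < \<theta>2"
    have "\<exists>y\<in>\<X>. x < y" using h(2) by (intro bexI[of _ "x+1"]) auto
    then show "measure_pmf.prob (P \<theta>2) {..x} < measure_pmf.prob (P \<theta>1) {..x}"
      using m h unfolding model_assumptions_def by blast
  qed
  have C: "class_M \<Theta> \<X> P \<alpha> Lf Uf"
    unfolding class_M_def using monoLf[OF assms(4)] monoUf[OF assms(4)]
      covLf[OF assms(4)] covUf[OF assms(4)] by blast
  have O: "(\<forall>\<theta>\<in>\<Theta>. expected_length P Lf Uf \<theta> \<le> expected_length P L U \<theta>) \<and>
            (\<forall>x\<in>\<X>. ci_length Lf Uf x \<le> ci_length L U x)"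
    if cM: "class_M \<Theta> \<X> P \<alpha> L U" for L U
  proof -
    have len: "ci_length Lf Uf x \<le> ci_length L U x" if "x \<in> \<X>" for x
      unfolding ci_length_def
      by (rule ereal_minus_mono[OF opt_U[OF cM assms(4) that] opt_L[OF cM assms(4) that]])
    have "expected_length P Lf Uf \<theta> \<le> expected_length P L U \<theta>" if th: "\<theta> \<in> \<Theta>" for \<theta>
      unfolding expected_length_def
    proof (rule nn_integral_mono_AE)
      show "AE x in measure_pmf (P \<theta>). e2ennreal (ci_length Lf Uf x) \<le> e2ennreal (ci_length L U x)"
        unfolding AE_measure_pmf_iff using supp[OF th] len by (auto intro: e2ennreal_mono)
    qed
    then show ?thesis using len by blast
  qed
  show ?thesis using C O by blast
qed

end
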